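(* Let $n$ be a positive integer with $n^2 \ge 811$. Every family of $n^2$ graphs, each with $n$ vertices, has an induced-universal graph with fewer than $15n^2/7$ vertices.
   Context: A graph $U$ is an induced-universal graph for a family $\mathscr{F}$ if every graph of $\mathscr{F}$ is isomorphic to an induced subgraph of $U$. *)

theory Defs
  imports Complex_Main
begin

text \<open>A finite simple graph: a finite vertex set V together with a symmetric,
irreflexive adjacency relation E (only its restriction to V matters).\<close>
type_synonym 'a graph = "'a set \<times> ('a \<Rightarrow> 'a \<Rightarrow> bool)"

definition verts :: "'a graph \<Rightarrow> 'a set" where "verts G = fst G"
definition adj :: "'a graph \<Rightarrow> 'a \<Rightarrow> 'a \<Rightarrow> bool" where "adj G = snd G"

definition simple_graph :: "'a graph \<Rightarrow> bool" where
  "simple_graph G \<longleftrightarrow> finite (verts G) \<and>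
     (\<forall>x\<in>verts G. \<forall>y\<in>verts G. adj G x y \<longleftrightarrow> adj G y x) \<and>
     (\<forall>x\<in>verts G. \<not> adj G x x)"

definition induced_embeds :: "'a graph \<Rightarrow> 'b graph \<Rightarrow> bool" where
  "induced_embeds G U \<longleftrightarrow> (\<exists>f. inj_on f (verts G) \<and> f ` verts G \<subseteq> verts U \<and>
     (\<forall>x\<in>verts G. \<forall>y\<in>verts G. adj U (f x) (f y) \<longleftrightarrow> adj G x y))"

definition induced_universal :: "'b graph \<Rightarrow> 'a graph set \<Rightarrow> bool" where
  "induced_universal U F \<longleftrightarrow> (\<forall>G\<in>F. induced_embeds G U)"

end

theory Submission
  imports Defs "HOL-Computational_Algebra.Primes"
begin

lemma sum_indicator_card: "finite A \<Longrightarrow> (\<Sum>i\<in>A. (if P i then 1 else 0::nat)) = card {i\<in>A. P i}"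
  by (simp add: sum.If_cases Int_def conj_commute)

lemma legendre:
  fixes p :: nat assumes p: "prime p" and "m < p ^ N"
  shows "multiplicity p (fact m) = (\<Sum>i\<in>{1..N}. m div p ^ i)"
using assms(2)
proof (induction m)
  case 0 then show ?case by simp
next
  case (Suc m)
  have IH: "multiplicity p (fact m) = (\<Sum>i\<in>{1..N}. m div p ^ i)" using Suc by simp
  have nu: "\<not> is_unit p" using prime_gt_1_nat[OF p] by simp
  have "multiplicity p (fact (Suc m) :: nat) = multiplicity p (Suc m * fact m)" by simp
  also have "\<dots> = multiplicity p (Suc m) + multiplicity p (fact m :: nat)"
    by (rule prime_elem_multiplicity_mult_distrib) (use p in auto)
  finally have e1: "multiplicity p (fact (Suc m) :: nat) = multiplicity p (Suc m) + multiplicity p (fact m :: nat)" .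
  have e2: "Suc m div p ^ i = m div p ^ i + (if p ^ i dvd Suc m then 1 else 0)" for i
    by (simp add: div_Suc dvd_eq_mod_eq_0)
  have s1: "(\<Sum>i\<in>{1..N}. Suc m div p ^ i) = (\<Sum>i\<in>{1..N}. m div p ^ i) + card {i\<in>{1..N}. p ^ i dvd Suc m}"
    by (simp add: e2 sum.distrib sum_indicator_card)
  have s2: "{i\<in>{1..N}. p ^ i dvd Suc m} = {1..multiplicity p (Suc m)}"
  proof -
    have "p ^ multiplicity p (Suc m) dvd Suc m" by (rule multiplicity_dvd)
    hence "p ^ multiplicity p (Suc m) \<le> Suc m" by (rule dvd_imp_le) simp
    hence "p ^ multiplicity p (Suc m) < p ^ N" using Suc.prems by linarith
    hence "multiplicity p (Suc m) < N" using power_less_imp_less_exp[of p] p prime_gt_1_nat by blast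
    moreover have iff: "\<And>i. p ^ i dvd Suc m \<longleftrightarrow> i \<le> multiplicity p (Suc m)"
      by (rule power_dvd_iff_le_multiplicity) (use nu in auto)
    ultimately show ?thesis unfolding iff by auto
  qed
  have "card {i\<in>{1..N}. p ^ i dvd Suc m} = multiplicity p (Suc m)" unfolding s2 by simp
  then show ?case using e1 IH s1 by linarith
qed

lemma two_n_less: "2 * n < (p::nat) ^ (2 * n)" if "p \<ge> 2"
proof -
  have "2 * n < 2 ^ (2 * n)" by (rule less_exp)
  also have "\<dots> \<le> p ^ (2 * n)" using that by (simp add: power_mono)
  finally show ?thesis .
qed

lemma mult_central:
  fixes p n :: nat assumes p: "prime p"
  shows "multiplicity p ((2*n) choose n) = (\<Sum>i\<in>{1..2*n}. 2*n div p ^ i - 2 * (n div p ^ i))"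
proof -
  have p2: "p \<ge> 2" using prime_ge_2_nat[OF p] .
  have f: "fact n * fact n * ((2*n) choose n) = (fact (2*n) :: nat)"
    using binomial_fact_lemma[of n "2*n"] by simp
  have "multiplicity p (fact (2*n) :: nat) = multiplicity p (fact n * fact n :: nat) + multiplicity p ((2*n) choose n)"
    unfolding f[symmetric] by (rule prime_elem_multiplicity_mult_distrib) (use p in auto)
  also have "multiplicity p (fact n * fact n :: nat) = multiplicity p (fact n :: nat) + multiplicity p (fact n :: nat)"
    by (rule prime_elem_multiplicity_mult_distrib) (use p in auto)
  finally have e: "multiplicity p ((2*n) choose n) = multiplicity p (fact (2*n) :: nat) - 2 * multiplicity p (fact n :: nat)" by simp
  have l1: "multiplicity p (fact (2*n) :: nat) = (\<Sum>i\<in>{1..2*n}. 2*n div p ^ i)"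
    by (rule legendre[OF p two_n_less[OF p2]])
  have "n \<le> 2 * n" by simp
  hence "n < p ^ (2*n)" using two_n_less[OF p2, of n] by linarith
  hence l2: "multiplicity p (fact n :: nat) = (\<Sum>i\<in>{1..2*n}. n div p ^ i)"
    by (rule legendre[OF p])
  have le: "2 * (n div p ^ i) \<le> 2*n div p ^ i" for i
  proof (cases "p ^ i = 0")
    case False
    have "n div p ^ i * p ^ i \<le> n" by simp
    hence "2 * (n div p ^ i) * p ^ i \<le> 2 * n" by simp
    thus ?thesis using False less_eq_div_iff_mult_less_eq by blast
  qed (use p2 in simp)
  have "(\<Sum>i\<in>{1..2*n}. 2*n div p ^ i - 2 * (n div p ^ i)) = (\<Sum>i\<in>{1..2*n}. 2*n div p ^ i) - (\<Sum>i\<in>{1..2*n}. 2 * (n div p ^ i))"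
    by (rule sum_subtractf_nat) (use le in auto)
  thus ?thesis using e l1 l2 by (simp add: sum_distrib_left)
qed

lemma term_le1: "2*n div d - 2 * (n div (d::nat)) \<le> 1"
proof -
  have "2*n div d \<le> 2 * (n div d) + 1"
  proof (cases "d = 0")
    case False
    have "n = d * (n div d) + n mod d" by simp
    hence "2*n = d * (2 * (n div d)) + 2 * (n mod d)" by (metis add_mult_distrib2 mult.left_commute)
    moreover have "2 * (n mod d) < 2 * d" using False by simp
    ultimately have "2*n < d * (2 * (n div d) + 2)" by (simp add: algebra_simps)
    thus ?thesis using False by (metis Suc_1 add_Suc_right less_Suc_eq_le less_mult_imp_div_less mult.commute)
  qed simp
  thus ?thesis by linarith
qed

lemma term_0: "2*n < d \<Longrightarrow> 2*n div d - 2 * (n div (d::nat)) = 0"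
  by simp

lemma central_pow_le:
  fixes p n :: nat assumes p: "prime p" and n: "n \<ge> 1"
  shows "p ^ multiplicity p ((2*n) choose n) \<le> 2*n"
proof (rule ccontr)
  assume H: "\<not> ?thesis"
  define e where "e = multiplicity p ((2*n) choose n)"
  define S where "S = {i\<in>{1..2*n}. p ^ i \<le> 2*n}"
  have p1: "p > 1" using prime_gt_1_nat[OF p] .
  have "e = (\<Sum>i\<in>{1..2*n}. 2*n div p ^ i - 2 * (n div p ^ i))"
    unfolding e_def by (rule mult_central[OF p])
  also have "\<dots> \<le> (\<Sum>i\<in>{1..2*n}. (if p ^ i \<le> 2*n then 1 else 0))"
  proof (rule sum_mono)
    fix i show "2*n div p ^ i - 2 * (n div p ^ i) \<le> (if p ^ i \<le> 2*n then 1 else 0)"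
      using term_le1[of n "p^i"] by auto
  qed
  also have "\<dots> = card S" unfolding S_def by (rule sum_indicator_card) simp
  finally have eS: "e \<le> card S" .
  have "S \<subseteq> {1..<e}"
  proof
    fix i assume "i \<in> S"
    hence i1: "p ^ i \<le> 2*n" "i \<ge> 1" unfolding S_def by auto
    have "2*n < p ^ e" using H unfolding e_def by simp
    hence "p ^ i < p ^ e" using i1 by linarith
    hence "i < e" by (rule power_less_imp_less_exp[OF p1])
    thus "i \<in> {1..<e}" using i1 by simp
  qed
  hence "card S \<le> e - 1" by (metis card_atLeastLessThan card_mono finite_atLeastLessThan)
  hence "e = 0" using eS by linarith
  thus False using H n unfolding e_def by simp
qed

lemma central_mult_le1:
  fixes p n :: nat assumes p: "prime p" and sq: "2*n < p * p"
  shows "multiplicity p ((2*n) choose n) \<le> 1"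
proof -
  have "multiplicity p ((2*n) choose n) = (\<Sum>i\<in>{1..2*n}. 2*n div p ^ i - 2 * (n div p ^ i))"
    by (rule mult_central[OF p])
  also have "\<dots> \<le> (\<Sum>i\<in>{1..2*n}. (if i = 1 then 1 else 0))"
  proof (rule sum_mono)
    fix i assume i: "i \<in> {1..2*n}"
    show "2*n div p ^ i - 2 * (n div p ^ i) \<le> (if i = 1 then 1 else 0)"
    proof (cases "i = 1")
      case False
      hence "i \<ge> 2" using i by auto
      hence "p ^ 2 \<le> p ^ i" using prime_gt_1_nat[OF p] by (simp add: power_increasing)
      hence "2*n < p ^ i" using sq by (simp add: power2_eq_square)
      thus ?thesis using False by simp
    qed (use term_le1[of n p] in simp)
  qed
  also have "\<dots> \<le> 1" by simp
  finally show ?thesis .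
qed

lemma central_mult_0:
  fixes p n :: nat assumes p: "prime p" and sq: "2*n < p * p" and "p \<le> n" and "2*n < 3*p"
  shows "multiplicity p ((2*n) choose n) = 0"
proof -
  have "multiplicity p ((2*n) choose n) = (\<Sum>i\<in>{1..2*n}. 2*n div p ^ i - 2 * (n div p ^ i))"
    by (rule mult_central[OF p])
  also have "\<dots> = 0"
  proof (rule sum.neutral, rule ballI)
    fix i assume i: "i \<in> {1..2*n}"
    show "2*n div p ^ i - 2 * (n div p ^ i) = 0"
    proof (cases "i = 1")
      case False
      hence "i \<ge> 2" using i by auto
      hence "p ^ 2 \<le> p ^ i" using prime_gt_1_nat[OF p] by (simp add: power_increasing)
      hence "2*n < p ^ i" using sq by (simp add: power2_eq_square)
      thus ?thesis by simp
    next
      case True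
      have a: "n div p = 1" using assms by (intro div_nat_eqI) auto
      have b: "2*n div p = 2" using assms by (intro div_nat_eqI) auto
      show ?thesis using True a b by simp
    qed
  qed
  finally show ?thesis .
qed

lemma prod_primes_dvd:
  fixes N :: nat
  assumes "finite T" "\<forall>p\<in>T. prime p \<and> p dvd N"
  shows "\<Prod>T dvd N"
  using assms
proof (induction T rule: finite_induct)
  case empty then show ?case by simp
next
  case (insert p T)
  have pp: "prime p" "p dvd N" using insert by auto
  have "\<not> p dvd \<Prod>T"
  proof
    assume "p dvd \<Prod>T"
    then obtain q where "q \<in> T" "p dvd q" using prime_dvd_prod_iff[OF insert(1) pp(1)] by auto
    hence "p = q" using insert(4) pp(1) by (metis insert_iff primes_dvd_imp_eq)
    thus False using insert(2) \<open>q \<in> T\<close> by simp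
  qed
  hence "coprime p (\<Prod>T)" using pp(1) by (simp add: prime_imp_coprime)
  moreover have "\<Prod>T dvd N" using insert by auto
  ultimately have "p * \<Prod>T dvd N" using pp(2) by (simp add: divides_mult)
  thus ?case using insert by simp
qed

lemma choose_odd_le: "(2*j+1) choose j \<le> (4::nat) ^ j"
proof -
  have "(2*j+1) choose j \<le> sum ((choose) (2 * j + 1)) {..j}"
    by (rule member_le_sum) auto
  also have "\<dots> = 2 ^ (2*j)" by (rule binomial_r_part_sum)
  also have "\<dots> = 4 ^ j" by (simp add: power_mult)
  finally show ?thesis .
qed

lemma primorial_le: "(\<Prod>p\<in>{p. prime p \<and> p \<le> m}. p) \<le> (4::nat) ^ m"
proof (induction m rule: less_induct)
  case (less m)
  show ?case
  proof (cases "m \<le> 2")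
    case True
    have "{p. prime p \<and> p \<le> m} \<subseteq> {2}"
    proof
      fix p assume "p \<in> {p. prime p \<and> p \<le> m}"
      hence "prime p" "p \<le> m" by auto
      moreover have "p \<ge> 2" by (rule prime_ge_2_nat) fact
      ultimately show "p \<in> {2}" using True by simp
    qed
    hence D: "{p. prime p \<and> p \<le> m} = {} \<or> {p. prime p \<and> p \<le> m} = {2}" by blast
    have m2: "m = 2" if "{p. prime p \<and> p \<le> m} = {2}"
    proof -
      have "(2::nat) \<in> {p. prime p \<and> p \<le> m}" using that by simp
      hence "2 \<le> m" by simp
      thus ?thesis using True by simp
    qed
    show ?thesis using D
    proof (elim disjE)
      assume E: "{p. prime p \<and> p \<le> m} = {}"
      show ?thesis unfolding E by simp
    next
      assume E: "{p. prime p \<and> p \<le> m} = {2}"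
      have "m = 2" using m2[OF E] .
      thus ?thesis unfolding E by simp
    qed
  next
    case False
    show ?thesis
    proof (cases "even m")
      case True
      have "\<not> prime m" using True False prime_odd_nat by fastforce
      hence eq: "{p. prime p \<and> p \<le> m} = {p. prime p \<and> p \<le> m - 1}" using False by (auto simp: le_diff_conv2) (metis le_antisym not_less_eq_eq)
      have "(\<Prod>p\<in>{p. prime p \<and> p \<le> m - 1}. p) \<le> 4 ^ (m - 1)" using less False by simp
      also have "\<dots> \<le> 4 ^ m" by (simp add: power_increasing)
      finally show ?thesis using eq by simp
    next
      case odd: False
      then obtain j where mj: "m = 2*j+1" using oddE by blast
      define T where "T = {p. prime p \<and> j+1 < p \<and> p \<le> 2*j+1}"
      have split: "{p. prime p \<and> p \<le> m} = {p. prime p \<and> p \<le> j+1} \<union> T" unfolding T_def mj by auto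
      have fin1: "finite {p. prime p \<and> p \<le> j+1}" by (rule finite_subset[of _ "{..j+1}"]) auto
      have fin2: "finite T" unfolding T_def by (rule finite_subset[of _ "{..2*j+1}"]) auto
      have disj: "{p. prime p \<and> p \<le> j+1} \<inter> T = {}" unfolding T_def by auto
      have "\<Prod>T dvd ((2*j+1) choose j)"
      proof (rule prod_primes_dvd[OF fin2], rule ballI)
        fix p assume "p \<in> T"
        hence p: "prime p" "j+1 < p" "p \<le> 2*j+1" unfolding T_def by auto
        have f: "fact j * fact (j+1) * ((2*j+1) choose j) = (fact (2*j+1) :: nat)"
          using binomial_fact_lemma[of j "2*j+1"] by (simp add: mult_2)
        have "p dvd fact (2*j+1)" using p prime_dvd_fact_iff by blast
        hence "p dvd fact j * fact (j+1) * ((2*j+1) choose j)" using f by simp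
        moreover have "\<not> p dvd (fact j :: nat)"
          by (subst prime_dvd_fact_iff[OF p(1)]) (use p in simp)
        moreover have "\<not> p dvd (fact (j+1) :: nat)"
          by (subst prime_dvd_fact_iff[OF p(1)]) (use p in simp)
        ultimately have "p dvd ((2*j+1) choose j)" using p(1) by (simp add: prime_dvd_mult_iff)
        thus "prime p \<and> p dvd ((2*j+1) choose j)" using p by simp
      qed
      hence T4: "\<Prod>T \<le> 4 ^ j" using choose_odd_le[of j] dvd_imp_le
        by (metis (no_types, lifting) le_trans zero_less_binomial_iff le_add2 mult_2 trans_le_add1)
      have "(\<Prod>p\<in>{p. prime p \<and> p \<le> m}. p) = (\<Prod>p\<in>{p. prime p \<and> p \<le> j+1}. p) * \<Prod>T"
        unfolding split by (rule prod.union_disjoint[OF fin1 fin2 disj])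
      also have "\<dots> \<le> 4 ^ (j+1) * 4 ^ j"
        using less[of "j+1"] False mj T4 by (intro mult_mono) auto
      also have "\<dots> = 4 ^ m" unfolding mj by (simp add: power_add[symmetric])
      finally show ?thesis .
    qed
  qed
qed

lemma isqrt_ex: "\<exists>k::nat. k*k \<le> x \<and> x < (k+1)*(k+1)"
proof (induction x)
  case 0 then show ?case by (intro exI[of _ 0]) simp
next
  case (Suc x)
  then obtain k where k: "k*k \<le> x" "x < (k+1)*(k+1)" by blast
  show ?case
  proof (cases "Suc x < (k+1)*(k+1)")
    case True thus ?thesis using k by (intro exI[of _ k]) simp
  next
    case False
    hence "Suc x = (k+1)*(k+1)" using k by linarith
    thus ?thesis by (intro exI[of _ "k+1"]) (simp add: algebra_simps)
  qed
qed

lemma pow6_step: "(a+1::nat)^6 \<le> 2 * a^6" if "a \<ge> 10"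
proof -
  have "10 * (a+1) \<le> 11 * a" using that by simp
  hence "(10 * (a+1))^6 \<le> (11 * a)^6" by (rule power_mono) simp
  hence "1000000 * (a+1)^6 \<le> 1771561 * a^6" by (simp only: power_mult_distrib) simp
  thus ?thesis by linarith
qed

lemma pow6_lt: "(k+1::nat)^6 < 2^k" if "k \<ge> 30"
  using that
proof (induction k rule: dec_induct)
  case base then show ?case by simp
next
  case (step k)
  have "(Suc k + 1)^6 \<le> 2 * (k+1)^6" using pow6_step[of "k+1"] step by simp
  also have "\<dots> < 2 * 2^k" using step by simp
  finally show ?case by simp
qed

lemma four_pow_le: "(4::nat) ^ n \<le> (2*n+1) * ((2*n) choose n)"
proof -
  have "(4::nat) ^ n = (\<Sum>k\<le>2*n. (2*n) choose k)" by (simp add: choose_row_sum power_mult)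
  also have "\<dots> \<le> (\<Sum>k\<le>2*n. (2*n) choose n)" by (rule sum_mono) (rule binomial_maximum')
  also have "\<dots> = (2*n+1) * ((2*n) choose n)" by simp
  finally show ?thesis .
qed

lemma bertrand_large:
  fixes n :: nat assumes n: "n \<ge> 450"
  shows "\<exists>p. prime p \<and> n < p \<and> p \<le> 2*n"
proof (rule ccontr)
  assume H: "\<not> ?thesis"
  define C where "C = (2*n) choose n"
  define PF where "PF = prime_factors C"
  define m where "m = 2*n div 3"
  obtain k where k: "k*k \<le> 2*n" "2*n < (k+1)*(k+1)" using isqrt_ex by blast
  have C0: "C > 0" unfolding C_def by simp
  have finPF: "finite PF" unfolding PF_def by simp
  have PFprops: "prime p \<and> p \<le> n \<and> multiplicity p C > 0" if "p \<in> PF" for p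
  proof -
    have pp: "prime p" "p dvd C" using that unfolding PF_def by auto
    have f: "fact n * fact n * C = (fact (2*n) :: nat)"
      unfolding C_def using binomial_fact_lemma[of n "2*n"] by simp
    have "C dvd fact (2*n)" unfolding f[symmetric] by (rule dvd_triv_right)
    hence "p dvd fact (2*n)" using pp(2) by (rule dvd_trans[rotated])
    hence "p \<le> 2*n" using prime_dvd_fact_iff[OF pp(1)] by simp
    hence "p \<le> n" using H pp(1) by (meson not_less)
    moreover have "multiplicity p C > 0" using pp C0 by (subst prime_multiplicity_gt_zero_iff) auto
    ultimately show ?thesis using pp by simp
  qed
  define P1 where "P1 = {p\<in>PF. p*p \<le> 2*n}"
  define P2 where "P2 = {p\<in>PF. \<not> p*p \<le> 2*n}"
  have "C = (\<Prod>p\<in>PF. p ^ multiplicity p C)" unfolding PF_def using prime_factorization_nat[OF C0] .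
  also have "\<dots> = (\<Prod>p\<in>P1. p ^ multiplicity p C) * (\<Prod>p\<in>P2. p ^ multiplicity p C)"
  proof -
    have "PF = P1 \<union> P2" "P1 \<inter> P2 = {}" unfolding P1_def P2_def by auto
    moreover have "finite P1" "finite P2" unfolding P1_def P2_def using finPF by auto
    ultimately show ?thesis by (simp add: prod.union_disjoint)
  qed
  finally have Csplit: "C = (\<Prod>p\<in>P1. p ^ multiplicity p C) * (\<Prod>p\<in>P2. p ^ multiplicity p C)" .
  have k1: "k \<ge> 30"
  proof (rule ccontr)
    assume "\<not> k \<ge> 30"
    hence "k + 1 \<le> 30" by simp
    hence "(k+1)*(k+1) \<le> 30*30" by (intro mult_mono) auto
    thus False using k n by simp
  qed
  obtain j where kj: "k = Suc j" using k1 by (cases k) auto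
  have P1sub: "P1 \<subseteq> {2..k}"
  proof
    fix p assume "p \<in> P1"
    hence "prime p" "p*p \<le> 2*n" unfolding P1_def using PFprops by auto
    moreover have "p \<le> k"
    proof (rule ccontr)
      assume "\<not> p \<le> k"
      hence "k+1 \<le> p" by simp
      hence "(k+1)*(k+1) \<le> p*p" by (intro mult_mono) auto
      thus False using k \<open>p*p \<le> 2*n\<close> by simp
    qed
    ultimately show "p \<in> {2..k}" using prime_ge_2_nat by auto
  qed
  hence cardP1: "card P1 \<le> k - 1" using card_mono[of "{2..k}" P1] by simp
  have A: "(\<Prod>p\<in>P1. p ^ multiplicity p C) \<le> (2*n) ^ (k - 1)"
  proof -
    have "(\<Prod>p\<in>P1. p ^ multiplicity p C) \<le> (\<Prod>p\<in>P1. 2*n)"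
      by (rule prod_mono) (use PFprops central_pow_le n in \<open>auto simp: P1_def C_def\<close>)
    also have "\<dots> = (2*n) ^ card P1" by simp
    also have "\<dots> \<le> (2*n) ^ (k - 1)" using cardP1 n by (intro power_increasing) auto
    finally show ?thesis .
  qed
  have P2sub: "P2 \<subseteq> {p. prime p \<and> p \<le> m}"
  proof
    fix p assume "p \<in> P2"
    hence p: "prime p" "p \<le> n" "multiplicity p C > 0" "2*n < p*p" unfolding P2_def using PFprops by auto
    have "\<not> 2*n < 3*p"
      using central_mult_0[OF p(1) p(4) p(2)] p(3) unfolding C_def by auto
    thus "p \<in> {p. prime p \<and> p \<le> m}" using p unfolding m_def by auto
  qed
  have B: "(\<Prod>p\<in>P2. p ^ multiplicity p C) \<le> 4 ^ m"
  proof -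
    have "(\<Prod>p\<in>P2. p ^ multiplicity p C) \<le> (\<Prod>p\<in>P2. p)"
    proof (rule prod_mono)
      fix p assume "p \<in> P2"
      hence p: "prime p" "2*n < p*p" unfolding P2_def using PFprops by auto
      have "multiplicity p C \<le> 1" using central_mult_le1[OF p] unfolding C_def .
      hence "p ^ multiplicity p C \<le> p ^ 1" using prime_gt_0_nat[OF p(1)]
        by (intro power_increasing) auto
      thus "0 \<le> p ^ multiplicity p C \<and> p ^ multiplicity p C \<le> p" by simp
    qed
    also have "\<dots> \<le> (\<Prod>p\<in>{p. prime p \<and> p \<le> m}. p)"
    proof (rule dvd_imp_le)
      show "\<Prod>P2 dvd \<Prod>{p. prime p \<and> p \<le> m}"
        by (rule prod_dvd_prod_subset[OF _ P2sub]) (rule finite_subset[of _ "{..m}"], auto)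
      show "0 < \<Prod>{p. prime p \<and> p \<le> m}"
        by (rule prod_pos) (auto simp: prime_gt_0_nat)
    qed
    also have "\<dots> \<le> 4 ^ m" by (rule primorial_le)
    finally show ?thesis .
  qed
  have "(4::nat) ^ n \<le> (2*n+1) * C" unfolding C_def by (rule four_pow_le)
  also have "\<dots> \<le> (2*n+1) * ((2*n) ^ (k - 1) * 4 ^ m)"
  proof (rule mult_le_mono2)
    show "C \<le> (2*n) ^ (k - 1) * 4 ^ m" by (subst Csplit, rule mult_le_mono[OF A B])
  qed
  also have "\<dots> = ((2*n+1) * (2*n) ^ (k - 1)) * 4 ^ m" by (rule mult.assoc[symmetric])
  also have "\<dots> \<le> (2*n+1) ^ k * 4 ^ m"
  proof -
    have "(2*n+1) * (2*n) ^ (k - 1) \<le> (2*n+1) * (2*n+1) ^ (k - 1)"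
      by (intro mult_le_mono2 power_mono) auto
    also have "\<dots> = (2*n+1) ^ k" using kj by simp
    finally show ?thesis by simp
  qed
  finally have "(4::nat) ^ (n - m) * 4 ^ m \<le> (2*n+1) ^ k * 4 ^ m"
    by (simp add: power_add[symmetric] m_def)
  hence "0 < (4::nat) ^ m \<longrightarrow> (4::nat) ^ (n - m) \<le> (2*n+1) ^ k" by (simp only: mult_le_cancel2)
  hence X: "(4::nat) ^ (n - m) \<le> (2*n+1) ^ k" by simp
  have "(2::nat) ^ (k*k) \<le> 2 ^ (2*n)" using k by (intro power_increasing) auto
  also have "\<dots> = 4 ^ n" by (simp add: power_mult)
  also have "\<dots> \<le> 4 ^ (3 * (n - m))" unfolding m_def by (intro power_increasing) auto
  also have "\<dots> = (4 ^ (n - m)) ^ 3" by (simp add: power_mult[symmetric] mult.commute)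
  also have "\<dots> \<le> ((2*n+1) ^ k) ^ 3" using X by (rule power_mono) simp
  also have "\<dots> \<le> (((k+1)*(k+1)) ^ k) ^ 3" using k by (intro power_mono) auto
  also have "\<dots> = ((k+1)^6) ^ k" by (simp add: power_mult[symmetric] power2_eq_square[symmetric] mult.commute)
  finally have "(2 ^ k) ^ k \<le> ((k+1::nat)^6) ^ k" by (simp add: power_mult[symmetric])
  moreover note kj
  ultimately have "(2 ^ k) ^ Suc j \<le> ((k+1::nat)^6) ^ Suc j" by (simp only:)
  hence "2 ^ k \<le> (k+1::nat)^6" by (rule power_le_imp_le_base) simp
  thus False using pow6_lt[OF k1] by simp
qed


lemma bertrand:
  fixes n :: nat assumes n: "n \<ge> 1"
  shows "\<exists>p. prime p \<and> n < p \<and> p \<le> 2*n"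
proof (cases "n \<ge> 450")
  case True thus ?thesis by (rule bertrand_large)
next
  case False
  have P: "prime (2::nat)" "prime (3::nat)" "prime (5::nat)" "prime (7::nat)" "prime (13::nat)" "prime (23::nat)" "prime (43::nat)" "prime (83::nat)" "prime (163::nat)" "prime (317::nat)" "prime (631::nat)" by code_simp+
  have "(1 \<le> n \<and> n < 2) \<or>
        (2 \<le> n \<and> n < 3) \<or>
        (3 \<le> n \<and> n < 5) \<or>
        (5 \<le> n \<and> n < 7) \<or>
        (7 \<le> n \<and> n < 13) \<or>
        (13 \<le> n \<and> n < 23) \<or>
        (23 \<le> n \<and> n < 43) \<or>
        (43 \<le> n \<and> n < 83) \<or>
        (83 \<le> n \<and> n < 163) \<or>
        (163 \<le> n \<and> n < 317) \<or>
        (317 \<le> n \<and> n < 631)" using False n by linarith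
  thus ?thesis
  proof (elim disjE)
      assume "1 \<le> n \<and> n < 2"
      thus ?thesis by (intro exI[of _ "2::nat"] conjI P(1)) linarith+
    next
      assume "2 \<le> n \<and> n < 3"
      thus ?thesis by (intro exI[of _ "3::nat"] conjI P(2)) linarith+
    next
      assume "3 \<le> n \<and> n < 5"
      thus ?thesis by (intro exI[of _ "5::nat"] conjI P(3)) linarith+
    next
      assume "5 \<le> n \<and> n < 7"
      thus ?thesis by (intro exI[of _ "7::nat"] conjI P(4)) linarith+
    next
      assume "7 \<le> n \<and> n < 13"
      thus ?thesis by (intro exI[of _ "13::nat"] conjI P(5)) linarith+
    next
      assume "13 \<le> n \<and> n < 23"
      thus ?thesis by (intro exI[of _ "23::nat"] conjI P(6)) linarith+
    next
      assume "23 \<le> n \<and> n < 43"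
      thus ?thesis by (intro exI[of _ "43::nat"] conjI P(7)) linarith+
    next
      assume "43 \<le> n \<and> n < 83"
      thus ?thesis by (intro exI[of _ "83::nat"] conjI P(8)) linarith+
    next
      assume "83 \<le> n \<and> n < 163"
      thus ?thesis by (intro exI[of _ "163::nat"] conjI P(9)) linarith+
    next
      assume "163 \<le> n \<and> n < 317"
      thus ?thesis by (intro exI[of _ "317::nat"] conjI P(10)) linarith+
    next
      assume "317 \<le> n \<and> n < 631"
      thus ?thesis by (intro exI[of _ "631::nat"] conjI P(11)) linarith+
  qed
qed

lemma key_inj:
  fixes p a b a' b' u v :: nat
  assumes p: "prime p" and lt: "a < p" "b < p" "a' < p" "b' < p" "u < p" "v < p" and uv: "u \<noteq> v"
    and e1: "(a + b*u) mod p = (a' + b'*u) mod p" and e2: "(a + b*v) mod p = (a' + b'*v) mod p"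
  shows "a = a' \<and> b = b'"
proof -
  have pi: "prime (int p)" using p by simp
  have d1: "int p dvd int (a + b*u) - int (a' + b'*u)"
    using e1 by (metis mod_eq_dvd_iff of_nat_mod)
  have d2: "int p dvd int (a + b*v) - int (a' + b'*v)"
    using e2 by (metis mod_eq_dvd_iff of_nat_mod)
  have "int p dvd (int (a + b*u) - int (a' + b'*u)) - (int (a + b*v) - int (a' + b'*v))"
    using d1 d2 by (rule dvd_diff)
  also have "(int (a + b*u) - int (a' + b'*u)) - (int (a + b*v) - int (a' + b'*v)) = (int b - int b') * (int u - int v)"
    by (simp add: algebra_simps)
  finally have "int p dvd (int b - int b') * (int u - int v)" .
  hence "int p dvd (int b - int b') \<or> int p dvd (int u - int v)" using pi by (simp add: prime_dvd_mult_iff)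
  moreover have "\<not> int p dvd (int u - int v)"
  proof
    assume "int p dvd (int u - int v)"
    moreover have "int u - int v \<noteq> 0" using uv by simp
    ultimately have "\<bar>int p\<bar> \<le> \<bar>int u - int v\<bar>" using dvd_imp_le_int by blast
    thus False using lt by linarith
  qed
  ultimately have "int p dvd (int b - int b')" by blast
  hence bb: "b = b'"
  proof (cases "b = b'")
    case False
    assume "int p dvd (int b - int b')"
    moreover have "int b - int b' \<noteq> 0" using False by simp
    ultimately have "\<bar>int p\<bar> \<le> \<bar>int b - int b'\<bar>" using dvd_imp_le_int by blast
    thus ?thesis using lt by linarith
  qed
  have "int p dvd int a - int a'" using d1 bb by (simp add: algebra_simps)
  hence "a = a'"
  proof (cases "a = a'")
    case False
    assume "int p dvd (int a - int a')"
    moreover have "int a - int a' \<noteq> 0" using False by simp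
    ultimately have "\<bar>int p\<bar> \<le> \<bar>int a - int a'\<bar>" using dvd_imp_le_int by blast
    thus ?thesis using lt by linarith
  qed
  thus ?thesis using bb by simp
qed


lemma divmod_aux: "r < (p::nat) \<Longrightarrow> (u*p + r) div p = u \<and> (u*p + r) mod p = r"
  by simp

theorem corollary2:
  fixes n :: nat and G :: "nat \<Rightarrow> 'a graph"
  assumes "n > 0" and "n^2 \<ge> 811"
    and "\<forall>i<n^2. simple_graph (G i) \<and> card (verts (G i)) = n"
  shows "\<exists>U :: nat graph. simple_graph U \<and>
           real (card (verts U)) < 15 * real n^2 / 7 \<and>
           induced_universal U (G ` {..<n^2})"
proof -
  have n29: "n \<ge> 29"
  proof (rule ccontr)
    assume "\<not> n \<ge> 29"
    hence "n \<le> 28" by simp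
    hence "n^2 \<le> 28^2" by (rule power_mono) simp
    thus False using assms(2) by simp
  qed
  have "n - 1 \<ge> 1" using n29 by simp
  then obtain p where p: "prime p" "n - 1 < p" "p \<le> 2*(n-1)" using bertrand[of "n-1"] by blast
  have np: "n \<le> p" using p(2) by simp
  have p2: "p \<le> 2*n - 2" using p(3) by simp
  have p0: "p > 0" using prime_gt_0_nat[OF p(1)] .
  have Gi: "simple_graph (G i)" "card (verts (G i)) = n" if "i < n^2" for i using assms(3) that by auto
  have "\<forall>i. \<exists>h. i < n^2 \<longrightarrow> bij_betw h {0..<n} (verts (G i))"
  proof
    fix i show "\<exists>h. i < n^2 \<longrightarrow> bij_betw h {0..<n} (verts (G i))"
    proof (cases "i < n^2")
      case True
      have "finite (verts (G i))" using Gi(1)[OF True] unfolding simple_graph_def by simp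
      thus ?thesis using ex_bij_betw_nat_finite[of "verts (G i)"] Gi(2)[OF True] by auto
    qed simp
  qed
  then obtain \<sigma> where \<sigma>: "\<And>i. i < n^2 \<Longrightarrow> bij_betw (\<sigma> i) {0..<n} (verts (G i))" by metis
  define c where "c i u = ((i div n) + (i mod n) * u) mod p" for i u
  define A where "A x y = (x < n*p \<and> y < n*p \<and> x div p \<noteq> y div p \<and>
      (\<exists>i<n^2. c i (x div p) = x mod p \<and> c i (y div p) = y mod p \<and>
         adj (G i) (\<sigma> i (x div p)) (\<sigma> i (y div p))))" for x y
  define U :: "nat graph" where "U = ({..<n*p}, A)"
  have vU: "verts U = {..<n*p}" and aU: "adj U = A" by (simp_all add: U_def verts_def adj_def)
  have clt: "c i u < p" for i u unfolding c_def using p0 by simp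
  have ilt: "i div n < n" "i mod n < n" if "i < n^2" for i
    using that assms(1) by (auto simp: power2_eq_square less_mult_imp_div_less)
  have cinj: "i = j" if "i < n^2" "j < n^2" "u < n" "v < n" "u \<noteq> v" "c i u = c j u" "c i v = c j v" for i j u v
  proof -
    have l: "i div n < p" "i mod n < p" "j div n < p" "j mod n < p" "u < p" "v < p"
      using ilt[OF that(1)] ilt[OF that(2)] that(3,4) np by linarith+
    have "i div n = j div n \<and> i mod n = j mod n"
      by (rule key_inj[OF p(1) l that(5)]) (use that(6,7) in \<open>simp_all add: c_def\<close>)
    thus ?thesis by (metis div_mult_mod_eq)
  qed
  have dlt: "x div p < n" if "x < n*p" for x using that by (simp add: less_mult_imp_div_less)
  have sv: "\<sigma> i u \<in> verts (G i)" if "i < n^2" "u < n" for i u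
    using \<sigma>[OF that(1)] that(2) by (auto simp: bij_betw_def)
  have simpU: "simple_graph U"
    unfolding simple_graph_def vU aU
  proof (intro conjI ballI)
    show "finite {..<n*p}" by simp
  next
    have AS: "A y x" if "A x y" for x y
    proof -
      from that obtain i where i: "x < n*p" "y < n*p" "x div p \<noteq> y div p" "i < n^2"
        "c i (x div p) = x mod p" "c i (y div p) = y mod p" "adj (G i) (\<sigma> i (x div p)) (\<sigma> i (y div p))"
        unfolding A_def by blast
      have "\<sigma> i (x div p) \<in> verts (G i)" "\<sigma> i (y div p) \<in> verts (G i)"
        using sv[OF i(4) dlt[OF i(1)]] sv[OF i(4) dlt[OF i(2)]] .
      hence "adj (G i) (\<sigma> i (y div p)) (\<sigma> i (x div p))"
        using Gi(1)[OF i(4)] i(7) unfolding simple_graph_def by blast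
      thus ?thesis unfolding A_def using i by metis
    qed
    fix x y
    show "A x y = A y x" using AS by blast
  next
    fix x show "\<not> A x x" unfolding A_def by simp
  qed
  have card: "real (card (verts U)) < 15 * real n^2 / 7"
  proof -
    have "card (verts U) = n * p" using vU by simp
    moreover have "real p \<le> 2 * real n - 2" using p2 n29 by linarith
    hence "real n * real p \<le> real n * (2 * real n - 2)" by (rule mult_left_mono) simp
    ultimately show ?thesis using n29 by (simp add: power2_eq_square)
  qed
  have univ: "induced_embeds (G j) U" if j: "j < n^2" for j
  proof -
    define \<tau> where "\<tau> = inv_into {0..<n} (\<sigma> j)"
    define f where "f v = \<tau> v * p + c j (\<tau> v)" for v
    have bj: "bij_betw (\<sigma> j) {0..<n} (verts (G j))" using \<sigma>[OF j] .
    have \<tau>in: "\<tau> v < n" if "v \<in> verts (G j)" for v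
      using bj that unfolding \<tau>_def by (metis atLeastLessThan_iff bij_betw_def inv_into_into)
    have \<sigma>\<tau>: "\<sigma> j (\<tau> v) = v" if "v \<in> verts (G j)" for v
      using bj that unfolding \<tau>_def by (meson bij_betw_inv_into_right)
    have fd: "f v div p = \<tau> v" "f v mod p = c j (\<tau> v)" for v
      unfolding f_def using divmod_aux[OF clt] by auto
    have flt: "f v < n*p" if "v \<in> verts (G j)" for v
    proof -
      have "f v < \<tau> v * p + p" unfolding f_def using clt by simp
      also have "\<dots> = (\<tau> v + 1) * p" by simp
      also have "\<dots> \<le> n * p" using \<tau>in[OF that] by (intro mult_right_mono) auto
      finally show ?thesis .
    qed
    have inj: "inj_on f (verts (G j))"
    proof (rule inj_onI)
      fix v w assume v: "v \<in> verts (G j)" and w: "w \<in> verts (G j)" and e: "f v = f w"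
      have "\<tau> v = \<tau> w" using fd(1)[of v] fd(1)[of w] e by simp
      thus "v = w" using \<sigma>\<tau>[OF v] \<sigma>\<tau>[OF w] by metis
    qed
    have adjeq: "A (f v) (f w) = adj (G j) v w" if v: "v \<in> verts (G j)" and w: "w \<in> verts (G j)" for v w
    proof
      assume "A (f v) (f w)"
      then obtain i where i: "i < n^2" "\<tau> v \<noteq> \<tau> w" "c i (\<tau> v) = c j (\<tau> v)" "c i (\<tau> w) = c j (\<tau> w)"
        "adj (G i) (\<sigma> i (\<tau> v)) (\<sigma> i (\<tau> w))"
        unfolding A_def fd by auto
      have "i = j" using cinj[OF i(1) j \<tau>in[OF v] \<tau>in[OF w] i(2) i(3) i(4)] .
      thus "adj (G j) v w" using i(5) \<sigma>\<tau>[OF v] \<sigma>\<tau>[OF w] by simp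
    next
      assume a: "adj (G j) v w"
      have "v \<noteq> w" using a Gi(1)[OF j] v unfolding simple_graph_def by auto
      hence "\<tau> v \<noteq> \<tau> w" using \<sigma>\<tau>[OF v] \<sigma>\<tau>[OF w] by metis
      moreover have "adj (G j) (\<sigma> j (\<tau> v)) (\<sigma> j (\<tau> w))" using a \<sigma>\<tau>[OF v] \<sigma>\<tau>[OF w] by simp
      ultimately show "A (f v) (f w)" unfolding A_def fd using flt[OF v] flt[OF w] j by blast
    qed
    show ?thesis unfolding induced_embeds_def
      using inj flt adjeq by (intro exI[of _ f]) (auto simp: vU aU)
  qed
  show ?thesis
    using simpU card univ by (intro exI[of _ U]) (auto simp: induced_universal_def)
qed

end
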